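(* Define $\mathcal F_c(b):=P_c\mathcal F(b)$ for $b\in\mathcal N$. Fix $e\in\mathcal N$ with $\|e\|=1$, so that $\mathcal N=\mathrm{span}\{e\}$ is identified with $\mathbb R$ via $\xi\mapsto\xi e$. Then $\mathcal F_c$ is a stable cubic on $\mathcal N\cong\mathbb R$: there is a constant $C>0$ such that $\mathcal F_c(\xi e)=-C\xi^3e$ for all $\xi\in\mathbb R$.
   Context: $\mathcal H$ is a separable real Hilbert space. $A$ is a symmetric, non-positive linear operator on $\mathcal H$ generating a compact analytic semigroup. It has a one-dimensional kernel $\mathcal N$, and $P_c$ denotes the orthogonal projection onto $\mathcal N$. For $\alpha\ge0$, $\mathcal H^\alpha=D((1-A)^\alpha)$. $X$ is a Banach space with continuous dense embeddings $\mathcal H^\alpha\subset X\subset\mathcal H$ for some $\alpha\in(0,1/2)$. $\mathcal F:X\to X^*\subset\mathcal H^{-\alpha}$ is cubic, i.e. $\mathcal F(u)=\mathcal F(u,u,u)$ for a trilinear map, and there is $c>0$ with $\langle\mathcal F(u)-\mathcal F(v),u-v\rangle\le -c\|u-v\|_X^4$ for all $u,v\in X$. *)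

theory Defs
  imports "HOL-Analysis.Analysis"
begin

definition C0_semigroup :: "(real \<Rightarrow> 'h::real_normed_vector \<Rightarrow> 'h) \<Rightarrow> bool" where
  "C0_semigroup S \<longleftrightarrow>
     (\<forall>t\<ge>0. bounded_linear (S t)) \<and> S 0 = id \<and>
     (\<forall>t\<ge>0. \<forall>s\<ge>0. S (t + s) = S t \<circ> S s) \<and>
     (\<forall>x. ((\<lambda>t. S t x) \<longlongrightarrow> x) (at_right 0))"

definition generator_of :: "('h::real_normed_vector \<Rightarrow> 'h) \<Rightarrow> 'h set \<Rightarrow> (real \<Rightarrow> 'h \<Rightarrow> 'h) \<Rightarrow> bool" where
  "generator_of A D S \<longleftrightarrow>
     D = {x. \<exists>y. ((\<lambda>t. (1 / t) *\<^sub>R (S t x - x)) \<longlongrightarrow> y) (at_right 0)} \<and>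
     (\<forall>x\<in>D. ((\<lambda>t. (1 / t) *\<^sub>R (S t x - x)) \<longlongrightarrow> A x) (at_right 0))"

definition compact_semigroup :: "(real \<Rightarrow> 'h::real_normed_vector \<Rightarrow> 'h) \<Rightarrow> bool" where
  "compact_semigroup S \<longleftrightarrow> (\<forall>t>0. compact (closure (S t ` ball 0 1)))"

text \<open>Analytic semigroup with generator (A, D), via the standard characterization
  S t maps into D for t > 0 and the norm of A S t is O(1/t) as t tends to 0 from the right.\<close>
definition analytic_semigroup :: "('h::real_normed_vector \<Rightarrow> 'h) \<Rightarrow> 'h set \<Rightarrow> (real \<Rightarrow> 'h \<Rightarrow> 'h) \<Rightarrow> bool" where
  "analytic_semigroup A D S \<longleftrightarrow>
     (\<forall>t>0. range (S t) \<subseteq> D) \<and>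
     (\<exists>M. \<forall>t\<in>{0<..1}. \<forall>x. norm (A (S t x)) \<le> M / t * norm x)"

definition generates_compact_analytic_semigroup ::
    "('h::real_normed_vector \<Rightarrow> 'h) \<Rightarrow> 'h set \<Rightarrow> (real \<Rightarrow> 'h \<Rightarrow> 'h) \<Rightarrow> bool" where
  "generates_compact_analytic_semigroup A D S \<longleftrightarrow>
     C0_semigroup S \<and> generator_of A D S \<and> compact_semigroup S \<and> analytic_semigroup A D S"

text \<open>Negative fractional power (1 - A) to the power -alpha, via the Gamma-integral formula
  (1-A)^(-alpha) y = 1/Gamma(alpha) * integral over (0,inf) of t^(alpha-1) e^(-t) S(t) y dt.
  The space H^alpha = D((1-A)^alpha) is its range, with norm of u = J y equal to norm y.\<close>
definition neg_frac_power :: "(real \<Rightarrow> 'h::real_normed_vector \<Rightarrow> 'h) \<Rightarrow> real \<Rightarrow> 'h \<Rightarrow> 'h" where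
  "neg_frac_power S \<alpha> y =
     (1 / Gamma \<alpha>) *\<^sub>R integral {0<..} (\<lambda>t. (t powr (\<alpha> - 1) * exp (- t)) *\<^sub>R S t y)"

definition norm_on :: "'h::real_vector set \<Rightarrow> ('h \<Rightarrow> real) \<Rightarrow> bool" where
  "norm_on X nX \<longleftrightarrow> subspace X \<and>
     (\<forall>x\<in>X. nX x \<ge> 0 \<and> (nX x = 0 \<longleftrightarrow> x = 0)) \<and>
     (\<forall>x\<in>X. \<forall>a. nX (a *\<^sub>R x) = \<bar>a\<bar> * nX x) \<and>
     (\<forall>x\<in>X. \<forall>y\<in>X. nX (x + y) \<le> nX x + nX y)"

definition complete_wrt :: "'h::real_vector set \<Rightarrow> ('h \<Rightarrow> real) \<Rightarrow> bool" where
  "complete_wrt X nX \<longleftrightarrow>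
     (\<forall>f. (\<forall>n. f n \<in> X) \<longrightarrow> (\<forall>\<epsilon>>0. \<exists>N. \<forall>m\<ge>N. \<forall>n\<ge>N. nX (f m - f n) < \<epsilon>) \<longrightarrow>
        (\<exists>x\<in>X. (\<lambda>n. nX (f n - x)) \<longlonglongrightarrow> 0))"

definition in_dual :: "'h::real_vector set \<Rightarrow> ('h \<Rightarrow> real) \<Rightarrow> ('h \<Rightarrow> real) \<Rightarrow> bool" where
  "in_dual X nX \<phi> \<longleftrightarrow>
     (\<forall>x\<in>X. \<forall>y\<in>X. \<forall>a b. \<phi> (a *\<^sub>R x + b *\<^sub>R y) = a * \<phi> x + b * \<phi> y) \<and>
     (\<exists>K. \<forall>x\<in>X. \<bar>\<phi> x\<bar> \<le> K * nX x)"

definition orth_proj :: "'h::real_inner set \<Rightarrow> 'h \<Rightarrow> 'h" where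
  "orth_proj N h = (THE p. p \<in> N \<and> (\<forall>y\<in>N. (h - p) \<bullet> y = 0))"

text \<open>Extension of the orthogonal projection onto N to functionals (elements of X*, a subspace
  of H^(-alpha)) by duality: P phi is the element n of N with n . h = phi (P h) for all h.\<close>
definition orth_proj_dual :: "'h::real_inner set \<Rightarrow> ('h \<Rightarrow> real) \<Rightarrow> 'h" where
  "orth_proj_dual N \<phi> = (THE n. n \<in> N \<and> (\<forall>h. n \<bullet> h = \<phi> (orth_proj N h)))"

end

theory Submission
  imports Defs
begin

lemma pow_minus_one_bound:
  fixes a :: real
  shows "\<bar>a ^ n - 1\<bar> \<le> (1 + \<bar>a - 1\<bar>) ^ n - 1"
proof (induction n)
  case 0 then show ?case by simp
next
  case (Suc n)
  define d where "d = \<bar>a - 1\<bar>"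
  have d0: "d \<ge> 0" by (simp add: d_def)
  have ad: "\<bar>a\<bar> \<le> 1 + d" by (simp add: d_def)
  have IH: "\<bar>a ^ n - 1\<bar> \<le> (1 + d) ^ n - 1" using Suc d_def by simp
  have "a ^ Suc n - 1 = a * (a ^ n - 1) + (a - 1)" by (simp add: algebra_simps)
  hence "\<bar>a ^ Suc n - 1\<bar> \<le> \<bar>a\<bar> * \<bar>a ^ n - 1\<bar> + d"
    by (metis abs_mult abs_triangle_ineq d_def)
  also have "\<dots> \<le> (1 + d) * ((1 + d) ^ n - 1) + d"
    by (intro add_right_mono mult_mono ad IH) (use d0 in auto)
  also have "\<dots> = (1 + d) ^ Suc n - 1" by (simp add: algebra_simps)
  finally show ?case by (simp add: d_def)
qed

theorem lemma4p1:
  fixes A :: "'h::{real_inner, complete_space, second_countable_topology} \<Rightarrow> 'h"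
    and D :: "'h set" and S :: "real \<Rightarrow> 'h \<Rightarrow> 'h"
    and X :: "'h set" and nX :: "'h \<Rightarrow> real" and \<alpha> :: real
    and T :: "'h \<Rightarrow> 'h \<Rightarrow> 'h \<Rightarrow> 'h \<Rightarrow> real"
    and F :: "'h \<Rightarrow> 'h \<Rightarrow> real"
    and c :: real and e :: 'h
  assumes A_lin: "subspace D" "\<forall>x\<in>D. \<forall>y\<in>D. \<forall>a b. A (a *\<^sub>R x + b *\<^sub>R y) = a *\<^sub>R A x + b *\<^sub>R A y"
    and A_sym: "\<forall>x\<in>D. \<forall>y\<in>D. A x \<bullet> y = x \<bullet> A y"
    and A_nonpos: "\<forall>x\<in>D. A x \<bullet> x \<le> 0"
    and A_gen: "generates_compact_analytic_semigroup A D S"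
    and kernel_1d: "\<exists>e0. e0 \<noteq> 0 \<and> {x\<in>D. A x = 0} = range (\<lambda>\<xi>. \<xi> *\<^sub>R e0)"
    and alpha: "0 < \<alpha>" "\<alpha> < 1/2"
    and X_banach: "norm_on X nX" "complete_wrt X nX"
    and X_in_H: "\<exists>K. \<forall>x\<in>X. norm x \<le> K * nX x" "closure X = UNIV"
    and Halpha_in_X: "\<forall>y. neg_frac_power S \<alpha> y \<in> X"
      "\<exists>K. \<forall>y. nX (neg_frac_power S \<alpha> y) \<le> K * norm y"
      "\<forall>x\<in>X. \<forall>\<epsilon>>0. \<exists>y. nX (x - neg_frac_power S \<alpha> y) < \<epsilon>"
    and T_dual: "\<forall>u\<in>X. \<forall>v\<in>X. \<forall>w\<in>X. in_dual X nX (T u v w)"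
    and T_trilinear:
      "\<forall>u1\<in>X. \<forall>u2\<in>X. \<forall>v\<in>X. \<forall>w\<in>X. \<forall>z\<in>X. \<forall>a b.
         T (a *\<^sub>R u1 + b *\<^sub>R u2) v w z = a * T u1 v w z + b * T u2 v w z"
      "\<forall>u\<in>X. \<forall>v1\<in>X. \<forall>v2\<in>X. \<forall>w\<in>X. \<forall>z\<in>X. \<forall>a b.
         T u (a *\<^sub>R v1 + b *\<^sub>R v2) w z = a * T u v1 w z + b * T u v2 w z"
      "\<forall>u\<in>X. \<forall>v\<in>X. \<forall>w1\<in>X. \<forall>w2\<in>X. \<forall>z\<in>X. \<forall>a b.
         T u v (a *\<^sub>R w1 + b *\<^sub>R w2) z = a * T u v w1 z + b * T u v w2 z"
    and F_cubic: "\<forall>u\<in>X. \<forall>z\<in>X. F u z = T u u u z"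
    and c_pos: "c > 0"
    and F_dissipative: "\<forall>u\<in>X. \<forall>v\<in>X. F u (u - v) - F v (u - v) \<le> - c * nX (u - v) ^ 4"
    and e_in_N: "e \<in> D" "A e = 0"
    and e_unit: "norm e = 1"
  shows "\<exists>C>0. \<forall>\<xi>::real.
           orth_proj_dual {x\<in>D. A x = 0} (F (\<xi> *\<^sub>R e)) = (- C * \<xi> ^ 3) *\<^sub>R e"
proof -
  define N where "N = {x\<in>D. A x = 0}"
  have ee: "e \<bullet> e = 1" using e_unit by (simp add: power2_norm_eq_inner[symmetric])
  have eN: "e \<in> N" using e_in_N by (simp add: N_def)
  have kerN: "x = (x \<bullet> e) *\<^sub>R e" if xN: "x \<in> N" for x
  proof -
    obtain e0 where e0: "e0 \<noteq> 0" "N = range (\<lambda>\<xi>. \<xi> *\<^sub>R e0)" using kernel_1d N_def by auto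
    obtain a where a: "e = a *\<^sub>R e0" using eN e0 by auto
    obtain b where b: "x = b *\<^sub>R e0" using xN e0 by auto
    have a0: "a \<noteq> 0" using a e_unit by auto
    have "x = (b / a) *\<^sub>R e" using a b a0 by simp
    moreover have "x \<bullet> e = b / a" using \<open>x = (b / a) *\<^sub>R e\<close> ee by simp
    ultimately show ?thesis by simp
  qed
  have C0: "C0_semigroup S" and gen: "generator_of A D S" and an: "analytic_semigroup A D S"
    using A_gen by (auto simp: generates_compact_analytic_semigroup_def)
  have blS: "\<And>t. t \<ge> 0 \<Longrightarrow> bounded_linear (S t)" and S0: "S 0 = id"
    and Sadd: "\<And>t s. t \<ge> 0 \<Longrightarrow> s \<ge> 0 \<Longrightarrow> S (t + s) = S t \<circ> S s"
    using C0 by (auto simp: C0_semigroup_def)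
  have genlim: "\<And>x. x \<in> D \<Longrightarrow> ((\<lambda>t. (1 / t) *\<^sub>R (S t x - x)) \<longlongrightarrow> A x) (at_right 0)"
    using gen by (auto simp: generator_of_def)
  have SD: "\<And>t x. t > 0 \<Longrightarrow> S t x \<in> D" using an by (auto simp: analytic_semigroup_def)
  have AS: "A (S t e) = 0" if t: "t > 0" for t
  proof -
    have l1: "((\<lambda>h. (1 / h) *\<^sub>R (S h (S t e) - S t e)) \<longlongrightarrow> A (S t e)) (at_right 0)"
      using genlim SD t by blast
    have "((\<lambda>h. S t ((1 / h) *\<^sub>R (S h e - e))) \<longlongrightarrow> S t 0) (at_right 0)"
      using bounded_linear.tendsto[OF blS, OF _ genlim[OF e_in_N(1)]] t e_in_N by simp
    hence l2: "((\<lambda>h. S t ((1 / h) *\<^sub>R (S h e - e))) \<longlongrightarrow> 0) (at_right 0)"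
      using linear_0[OF bounded_linear.linear[OF blS]] t by simp
    have "\<forall>\<^sub>F h in at_right 0. S t ((1 / h) *\<^sub>R (S h e - e)) = (1 / h) *\<^sub>R (S h (S t e) - S t e)"
      using eventually_at_right_less
    proof (rule eventually_mono)
      fix h :: real assume h: "0 < h"
      have "S h (S t e) = S (h + t) e" using Sadd[of h t] h t by simp
      also have "\<dots> = S (t + h) e" by (simp add: add.commute)
      also have "\<dots> = S t (S h e)" using Sadd[of t h] h t by simp
      finally have "S h (S t e) = S t (S h e)" .
      moreover have "S t ((1 / h) *\<^sub>R (S h e - e)) = (1 / h) *\<^sub>R (S t (S h e) - S t e)"
        using linear_cmul[OF bounded_linear.linear[OF blS]] linear_diff[OF bounded_linear.linear[OF blS]] t
        by simp
      ultimately show "S t ((1 / h) *\<^sub>R (S h e - e)) = (1 / h) *\<^sub>R (S h (S t e) - S t e)" by simp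
    qed
    with l2 have "((\<lambda>h. (1 / h) *\<^sub>R (S h (S t e) - S t e)) \<longlongrightarrow> 0) (at_right 0)"
      by (rule Lim_transform_eventually)
    from tendsto_unique[OF _ l1 this] show ?thesis by simp
  qed
  define lam where "lam t = S t e \<bullet> e" for t
  have Slam: "S t e = lam t *\<^sub>R e" if "t \<ge> 0" for t
  proof (cases "t = 0")
    case True then show ?thesis using S0 ee by (simp add: lam_def)
  next
    case False
    hence "S t e \<in> N" using that AS SD by (simp add: N_def)
    from kerN[OF this] show ?thesis by (simp add: lam_def)
  qed
  have lam_mult: "lam (t + s) = lam t * lam s" if "t \<ge> 0" "s \<ge> 0" for t s
  proof -
    have "S (t + s) e = S t (S s e)" using Sadd that by simp
    also have "\<dots> = lam s *\<^sub>R S t e"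
      using Slam[OF that(2)] linear_cmul[OF bounded_linear.linear[OF blS[OF that(1)]]] by simp
    also have "\<dots> = (lam s * lam t) *\<^sub>R e" using Slam[OF that(1)] by simp
    finally show ?thesis using ee by (simp add: lam_def)
  qed
  have lam_pow: "lam (real n * h) = lam h ^ n" if "h \<ge> 0" for n h
  proof (induction n)
    case 0 then show ?case using S0 ee by (simp add: lam_def)
  next
    case (Suc n)
    have "real (Suc n) * h = h + real n * h" by (simp add: algebra_simps)
    then show ?case using lam_mult[of h "real n * h"] that Suc by simp
  qed
  have lamD: "((\<lambda>h. (1 / h) * (lam h - 1)) \<longlongrightarrow> 0) (at_right 0)"
  proof -
    have "((\<lambda>h. ((1 / h) *\<^sub>R (S h e - e)) \<bullet> e) \<longlongrightarrow> A e \<bullet> e) (at_right 0)"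
      by (intro tendsto_intros genlim e_in_N)
    then show ?thesis using e_in_N ee by (simp add: lam_def inner_diff_left)
  qed
  have lam1: "lam t = 1" if t: "t > 0" for t
  proof -
    have bound: "\<bar>lam t - 1\<bar> \<le> exp (\<epsilon> * t) - 1" if eps: "\<epsilon> > 0" for \<epsilon>
    proof -
      have "\<forall>\<^sub>F h in at_right 0. dist ((1 / h) * (lam h - 1)) 0 < \<epsilon>"
        using tendstoD[OF lamD eps] by simp
      then obtain \<delta> where d: "\<delta> > 0" "\<And>h. h > 0 \<Longrightarrow> h < \<delta> \<Longrightarrow> \<bar>(1 / h) * (lam h - 1)\<bar> < \<epsilon>"
        unfolding eventually_at_right_field by auto
      obtain n :: nat where n: "t / \<delta> < real n" using reals_Archimedean2 by blast
      have npos: "real n > 0" using n t d(1) by (smt (verit) divide_pos_pos)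
      define h where "h = t / real n"
      have hpos: "h > 0" using npos t by (simp add: h_def)
      have hd: "h < \<delta>" using n d(1) npos by (simp add: h_def field_simps)
      have "\<bar>lam h - 1\<bar> < \<epsilon> * h"
        using d(2)[OF hpos hd] hpos by (simp add: abs_mult field_simps)
      hence hb: "\<bar>lam h - 1\<bar> \<le> \<epsilon> * t / real n" by (simp add: h_def)
      have "lam t = lam h ^ n" using lam_pow[of h n] hpos npos by (simp add: h_def)
      hence "\<bar>lam t - 1\<bar> \<le> (1 + \<bar>lam h - 1\<bar>) ^ n - 1" using pow_minus_one_bound by simp
      also have "\<dots> \<le> (1 + \<epsilon> * t / real n) ^ n - 1"
        using hb by (simp add: power_mono)
      also have "\<dots> \<le> exp (\<epsilon> * t) - 1"
        using exp_ge_one_plus_x_over_n_power_n[where x="\<epsilon> * t" and n=n] eps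
          mult_pos_pos[OF eps t] t npos
        by (simp add: mult_nonneg_nonneg)
      finally show ?thesis .
    qed
    have "((\<lambda>\<epsilon>. exp (\<epsilon> * t) - 1) \<longlongrightarrow> exp (0 * t) - 1) (at_right (0::real))"
      by (intro tendsto_intros)
    hence "\<bar>lam t - 1\<bar> \<le> exp (0 * t) - 1"
      by (rule tendsto_lowerbound) (auto intro: eventually_mono[OF eventually_at_right_less] bound)
    then show ?thesis by simp
  qed
  have Se: "S t e = e" if "t > 0" for t using Slam[of t] lam1[OF that] that by simp
  have Gint: "((\<lambda>t. t powr (\<alpha> - 1) * exp (- t)) has_integral Gamma \<alpha>) {0<..}"
  proof -
    have "((\<lambda>t. t powr (\<alpha> - 1) / exp t) has_integral Gamma \<alpha>) {0..}"
      using Gamma_integral_real alpha by blast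
    hence "((\<lambda>t. if t \<in> {0<..} then t powr (\<alpha> - 1) / exp t else 0) has_integral Gamma \<alpha>) {0..}"
      by (rule has_integral_spike [of "{0}", rotated 2]) auto
    hence "((\<lambda>t. t powr (\<alpha> - 1) / exp t) has_integral Gamma \<alpha>) {0<..}"
      by (subst (asm) has_integral_restrict) auto
    then show ?thesis by (simp add: exp_minus field_simps)
  qed
  have "integral {0<..} (\<lambda>t. (t powr (\<alpha> - 1) * exp (- t)) *\<^sub>R S t e)
      = integral {0<..} (\<lambda>t. (t powr (\<alpha> - 1) * exp (- t)) *\<^sub>R e)"
    by (rule integral_cong) (simp add: Se)
  also have "\<dots> = Gamma \<alpha> *\<^sub>R e"
    by (rule integral_unique, rule has_integral_scaleR_left[OF Gint])
  finally have "neg_frac_power S \<alpha> e = e"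
    using Gamma_real_pos[OF alpha(1)] by (simp add: neg_frac_power_def)
  hence eX: "e \<in> X" using Halpha_in_X(1) by metis
  have subX: "subspace X" using X_banach(1) by (simp add: norm_on_def)
  have subD: "subspace D" using A_lin(1) .
  have scN: "c *\<^sub>R e \<in> N" for c
  proof -
    have "c *\<^sub>R e \<in> D" using subD e_in_N(1) by (simp add: subspace_scale)
    moreover have "A (c *\<^sub>R e + 0 *\<^sub>R e) = c *\<^sub>R A e + 0 *\<^sub>R A e"
      using A_lin(2) e_in_N(1) by blast
    ultimately show ?thesis using e_in_N(2) by (simp add: N_def)
  qed
  have scX: "c *\<^sub>R e \<in> X" for c using subX eX by (simp add: subspace_scale)
  have proj: "orth_proj N h = (h \<bullet> e) *\<^sub>R e" for h
    unfolding orth_proj_def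
  proof (rule the_equality)
    show "(h \<bullet> e) *\<^sub>R e \<in> N \<and> (\<forall>y\<in>N. (h - (h \<bullet> e) *\<^sub>R e) \<bullet> y = 0)"
    proof (intro conjI ballI)
      show "(h \<bullet> e) *\<^sub>R e \<in> N" by (rule scN)
      fix y assume "y \<in> N"
      hence "y = (y \<bullet> e) *\<^sub>R e" by (rule kerN)
      hence "(h - (h \<bullet> e) *\<^sub>R e) \<bullet> y = (y \<bullet> e) * (h \<bullet> e - (h \<bullet> e) * (e \<bullet> e))"
        by (metis inner_diff_left inner_scaleR_left inner_scaleR_right inner_commute)
      then show "(h - (h \<bullet> e) *\<^sub>R e) \<bullet> y = 0" using ee by simp
    qed
  next
    fix p assume p: "p \<in> N \<and> (\<forall>y\<in>N. (h - p) \<bullet> y = 0)"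
    hence "(h - p) \<bullet> e = 0" using eN by blast
    hence "p \<bullet> e = h \<bullet> e" by (simp add: inner_diff_left)
    then show "p = (h \<bullet> e) *\<^sub>R e" using kerN p by metis
  qed
  define K where "K = T e e e e"
  have T0: "T 0 0 0 e = 0"
  proof -
    have "T (0 *\<^sub>R e + 0 *\<^sub>R e) 0 0 e = 0 * T e 0 0 e + 0 * T e 0 0 e"
      using T_trilinear(1) eX subspace_0[OF subX] by blast
    then show ?thesis by simp
  qed
  have nXe: "nX e > 0"
  proof -
    have "e \<noteq> 0" using e_unit by auto
    then show ?thesis using X_banach(1) eX unfolding norm_on_def by force
  qed
  have "F e (e - 0) - F 0 (e - 0) \<le> - c * nX (e - 0) ^ 4"
    using F_dissipative eX subspace_0[OF subX] by blast
  hence "K \<le> - c * nX e ^ 4" using F_cubic eX subspace_0[OF subX] T0 by (simp add: K_def)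
  moreover have "c * nX e ^ 4 > 0" using c_pos nXe by simp
  ultimately have Kneg: "K < 0" by linarith
  show ?thesis
  proof (intro exI[of _ "- K"] conjI allI)
    show "- K > 0" using Kneg by simp
    fix \<xi> :: real
    define u where "u = \<xi> *\<^sub>R e"
    have uX: "u \<in> X" using scX by (simp add: u_def)
    have lin: "\<forall>x\<in>X. \<forall>y\<in>X. \<forall>a b. T u u u (a *\<^sub>R x + b *\<^sub>R y) = a * T u u u x + b * T u u u y"
      using T_dual uX by (simp add: in_dual_def)
    have Fe: "F u (a *\<^sub>R e) = a * F u e" for a
    proof -
      have "T u u u (a *\<^sub>R e + 0 *\<^sub>R e) = a * T u u u e + 0 * T u u u e" using lin eX by blast
      then show ?thesis using F_cubic uX eX scX by simp
    qed
    have t1: "T u u u e = \<xi> * T e u u e"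
    proof -
      have "T (\<xi> *\<^sub>R e + 0 *\<^sub>R e) u u e = \<xi> * T e u u e + 0 * T e u u e"
        using T_trilinear(1) eX uX by blast
      then show ?thesis by (simp add: u_def)
    qed
    have t2: "T e u u e = \<xi> * T e e u e"
    proof -
      have "T e (\<xi> *\<^sub>R e + 0 *\<^sub>R e) u e = \<xi> * T e e u e + 0 * T e e u e"
        using T_trilinear(2) eX uX by blast
      then show ?thesis by (simp add: u_def)
    qed
    have t3: "T e e u e = \<xi> * T e e e e"
    proof -
      have "T e e (\<xi> *\<^sub>R e + 0 *\<^sub>R e) e = \<xi> * T e e e e + 0 * T e e e e"
        using T_trilinear(3) eX uX by blast
      then show ?thesis by (simp add: u_def)
    qed
    have Fue: "F u e = \<xi> ^ 3 * K" using F_cubic uX eX t1 t2 t3 by (simp add: K_def power3_eq_cube)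
    have "orth_proj_dual N (F u) = (\<xi> ^ 3 * K) *\<^sub>R e"
      unfolding orth_proj_dual_def
    proof (rule the_equality)
      show "(\<xi> ^ 3 * K) *\<^sub>R e \<in> N \<and> (\<forall>h. (\<xi> ^ 3 * K) *\<^sub>R e \<bullet> h = F u (orth_proj N h))"
        using scN proj Fe Fue by (simp add: inner_commute)
    next
      fix n assume n: "n \<in> N \<and> (\<forall>h. n \<bullet> h = F u (orth_proj N h))"
      hence "n \<bullet> e = F u (orth_proj N e)" by blast
      also have "\<dots> = \<xi> ^ 3 * K" using proj Fe Fue ee by simp
      finally show "n = (\<xi> ^ 3 * K) *\<^sub>R e" using kerN n by metis
    qed
    then show "orth_proj_dual {x \<in> D. A x = 0} (F (\<xi> *\<^sub>R e)) = (- (- K) * \<xi> ^ 3) *\<^sub>R e"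
      by (simp add: N_def u_def mult.commute)
  qed
qed


end
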